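(* Let $\mathrm{UB}(m,k):=m(m-1)+mk$. There exists a parameter-free robust algorithm for the Discriminative Feature Feedback protocol described in the context (i.e., one that receives no input parameters) such that, for every $m,k$ and every input stream that is consistent with some representation of size $m$ with at most $k$ exceptions, the algorithm makes at most \[32\,\mathrm{UB}(m,k)\log^2\big(8\,\mathrm{UB}(m,k)\big) = \tilde{O}(m^2+mk)\] mistakes.
   Context: Setting. Let $\mathcal{X}$ be a domain of examples, $\mathcal{Y}$ a finite set of labels, and $\Phi$ a (possibly infinite, not necessarily known to the learner) set of binary features $\phi:\mathcal{X}\to\{\texttt{true},\texttt{false}\}$, closed under negation. A representation of size $m$ is a family $\mathcal{G}=\{G_1,\dots,G_m\}$ of subsets (components) of $\mathcal{X}$ with $\mathcal{X}=\bigcup_i G_i$; each component $G$ has a label $\ell(G)\in\mathcal{Y}$; for each $x$ a fixed component $G(x)\ni x$ is chosen, and the target concept is $c^*(x)=\ell(G(x))$. For any two components $G_i,G_j$ with $\ell(G_i)\neq\ell(G_j)$ there is a discriminative feature $\phi(G_i,G_j)\in\Phi$ true on every $x\in G_i$ and false on every $x\in G_j$, with $\phi(G_j,G_i)=\neg\phi(G_i,G_j)$. Protocol. The learner first receives an example $x_0$ with its label $y_0$. Then in each round: an example $x_t$ arrives; the learner predicts a label $\hat y_t$ together with an explanation $\hat x_t$, an example previously observed with label $\hat y_t$; if the prediction is correct no feedback is given; if it is incorrect (a mistake), the teacher provides $y_t=c^*(x_t)$ and the feature $\phi(G(x_t),G(\hat x_t))$. An example is an exception if the teacher's feedback on it is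 inconsistent with the representation and the protocol. The stream is consistent with a representation of size $m$ with at most $k$ exceptions if some such representation exists for which all feedback conforms to the protocol except on at most $k$ examples; the stream is otherwise arbitrary. *)

theory Defs
  imports Complex_Main
begin

text \<open>Teacher feedback in a round: None = no feedback (prediction accepted as correct);
  Some (y, phi) = mistake, with correct label y and discriminative feature phi.\<close>
type_synonym ('x, 'y) feedback = "('y \<times> ('x \<Rightarrow> bool)) option"

text \<open>A (deterministic, parameter-free) learner: given the initial labelled example (x0, y0),
  the history of previous rounds (example, feedback) and the current example, it outputs
  a predicted label together with an explanation example.\<close>
type_synonym ('x, 'y) learner =
  "'x \<Rightarrow> 'y \<Rightarrow> ('x \<times> ('x, 'y) feedback) list \<Rightarrow> 'x \<Rightarrow> 'y \<times> 'x"

definition pred :: "('x, 'y) learner \<Rightarrow> 'x \<Rightarrow> 'y \<Rightarrow> ('x \<times> ('x, 'y) feedback) list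
    \<Rightarrow> nat \<Rightarrow> 'y \<times> 'x" where
  "pred L x0 y0 rs i = L x0 y0 (take i rs) (fst (rs ! i))"

definition observed :: "('x, 'y) learner \<Rightarrow> 'x \<Rightarrow> 'y \<Rightarrow> ('x \<times> ('x, 'y) feedback) list
    \<Rightarrow> nat \<Rightarrow> ('x \<times> 'y) set" where
  "observed L x0 y0 rs i = insert (x0, y0)
     {(fst (rs ! j), (case snd (rs ! j) of None \<Rightarrow> fst (pred L x0 y0 rs j) | Some (y, _) \<Rightarrow> y)) | j. j < i}"

definition valid_explanations :: "('x, 'y) learner \<Rightarrow> bool" where
  "valid_explanations L \<longleftrightarrow> (\<forall>x0 y0 rs i. i < length rs \<longrightarrow>
     (snd (pred L x0 y0 rs i), fst (pred L x0 y0 rs i)) \<in> observed L x0 y0 rs i)"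

definition neg_closed :: "('x \<Rightarrow> bool) set \<Rightarrow> bool" where
  "neg_closed Phi \<longleftrightarrow> (\<forall>\<phi>\<in>Phi. (\<lambda>x. \<not> \<phi> x) \<in> Phi)"

text \<open>A representation of size m: components G 0, ..., G (m-1), labels lab, the chosen component
  sel x (with x in G (sel x), so the components cover the domain), and discriminative
  features phi i j in Phi for components with distinct labels.\<close>
definition is_representation :: "('x \<Rightarrow> bool) set \<Rightarrow> nat \<Rightarrow> (nat \<Rightarrow> 'x set) \<Rightarrow> (nat \<Rightarrow> 'y)
    \<Rightarrow> ('x \<Rightarrow> nat) \<Rightarrow> (nat \<Rightarrow> nat \<Rightarrow> ('x \<Rightarrow> bool)) \<Rightarrow> bool" where
  "is_representation Phi m G lab sel phi \<longleftrightarrow>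
     (\<forall>x. sel x < m \<and> x \<in> G (sel x)) \<and>
     (\<forall>i<m. \<forall>j<m. lab i \<noteq> lab j \<longrightarrow>
        phi i j \<in> Phi \<and> (\<forall>x\<in>G i. phi i j x) \<and> (\<forall>x\<in>G j. \<not> phi i j x) \<and>
        phi j i = (\<lambda>x. \<not> phi i j x))"

text \<open>Round i conforms to the protocol w.r.t. the representation (target c*(x) = lab (sel x)).\<close>
definition conforms :: "('x, 'y) learner \<Rightarrow> 'x \<Rightarrow> 'y \<Rightarrow> ('x \<times> ('x, 'y) feedback) list
    \<Rightarrow> (nat \<Rightarrow> 'y) \<Rightarrow> ('x \<Rightarrow> nat) \<Rightarrow> (nat \<Rightarrow> nat \<Rightarrow> ('x \<Rightarrow> bool)) \<Rightarrow> nat \<Rightarrow> bool" where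
  "conforms L x0 y0 rs lab sel phi i \<longleftrightarrow>
     (let x = fst (rs ! i); yh = fst (pred L x0 y0 rs i); xh = snd (pred L x0 y0 rs i) in
      case snd (rs ! i) of
        None \<Rightarrow> yh = lab (sel x)
      | Some (y, f) \<Rightarrow> yh \<noteq> lab (sel x) \<and> y = lab (sel x) \<and>
                       lab (sel x) \<noteq> lab (sel xh) \<and> f = phi (sel x) (sel xh))"

definition num_exceptions :: "('x, 'y) learner \<Rightarrow> 'x \<Rightarrow> 'y \<Rightarrow> ('x \<times> ('x, 'y) feedback) list
    \<Rightarrow> (nat \<Rightarrow> 'y) \<Rightarrow> ('x \<Rightarrow> nat) \<Rightarrow> (nat \<Rightarrow> nat \<Rightarrow> ('x \<Rightarrow> bool)) \<Rightarrow> nat" where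
  "num_exceptions L x0 y0 rs lab sel phi =
     (if y0 = lab (sel x0) then 0 else 1) +
     card {i. i < length rs \<and> \<not> conforms L x0 y0 rs lab sel phi i}"

definition consistent_stream :: "('x \<Rightarrow> bool) set \<Rightarrow> nat \<Rightarrow> nat \<Rightarrow> ('x, 'y) learner
    \<Rightarrow> 'x \<Rightarrow> 'y \<Rightarrow> ('x \<times> ('x, 'y) feedback) list \<Rightarrow> bool" where
  "consistent_stream Phi m k L x0 y0 rs \<longleftrightarrow>
     (\<exists>G lab sel phi. is_representation Phi m G lab sel phi \<and>
        num_exceptions L x0 y0 rs lab sel phi \<le> k)"

definition mistakes :: "('x \<times> ('x, 'y) feedback) list \<Rightarrow> nat" where
  "mistakes rs = card {i. i < length rs \<and> snd (rs ! i) \<noteq> None}"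

definition UB :: "nat \<Rightarrow> nat \<Rightarrow> nat" where
  "UB m k = m * (m - 1) + m * k"

end

theory Submission
  imports Defs
begin

type_synonym ('x,'y) proto = "'x \<times> 'y \<times> ('x \<Rightarrow> bool) list"

definition sat :: "('x,'y) proto \<Rightarrow> 'x \<Rightarrow> bool" where
  "sat p z \<longleftrightarrow> (\<forall>f\<in>set (snd (snd p)). f z)"

definition fidx :: "('x,'y) proto list \<Rightarrow> 'x \<Rightarrow> nat option" where
  "fidx S z = (if \<exists>i<length S. sat (S!i) z then Some (LEAST i. i<length S \<and> sat (S!i) z) else None)"

lemma fidx_Some: "fidx S z = Some i \<Longrightarrow> i < length S \<and> sat (S!i) z"
  unfolding fidx_def
  by (metis (mono_tags, lifting) LeastI_ex option.distinct(1) option.inject)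

lemma fidx_None: "fidx S z = None \<Longrightarrow> i < length S \<Longrightarrow> \<not> sat (S!i) z"
  unfolding fidx_def by (auto split: if_splits)

definition predict :: "('x,'y) proto list \<Rightarrow> 'x \<Rightarrow> 'y \<Rightarrow> 'x \<Rightarrow> 'y \<times> 'x" where
  "predict S x0 y0 z = (case fidx S z of Some i \<Rightarrow> (fst (snd (S!i)), fst (S!i)) | None \<Rightarrow> (y0, x0))"

definition addf :: "('x \<Rightarrow> bool) \<Rightarrow> ('x,'y) proto \<Rightarrow> ('x,'y) proto" where
  "addf f p = (fst p, fst (snd p), snd (snd p) @ [f])"

definition upd1 :: "('x,'y) proto list \<Rightarrow> 'x \<Rightarrow> ('x \<Rightarrow> bool) \<Rightarrow> ('x,'y) proto list" where
  "upd1 S z \<phi> = (case fidx S z of Some i \<Rightarrow> S[i := addf (\<lambda>w. \<not> \<phi> w) (S!i)] | None \<Rightarrow> S)"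

definition stepS :: "('x,'y) proto list \<Rightarrow> 'x \<times> ('x,'y) feedback \<Rightarrow> ('x,'y) proto list" where
  "stepS S r = (case snd r of None \<Rightarrow> S | Some (y, \<phi>) \<Rightarrow>
     (if \<exists>j<length (upd1 S (fst r) \<phi>). sat (upd1 S (fst r) \<phi> ! j) (fst r) \<and> fst (snd (upd1 S (fst r) \<phi> ! j)) = y
      then upd1 S (fst r) \<phi> else upd1 S (fst r) \<phi> @ [(fst r, y, [])]))"

definition stateS :: "'x \<Rightarrow> 'y \<Rightarrow> ('x \<times> ('x,'y) feedback) list \<Rightarrow> ('x,'y) proto list" where
  "stateS x0 y0 h = foldl stepS [(x0,y0,[])] h"

definition Lrn :: "('x,'y) learner" where
  "Lrn x0 y0 h z = predict (stateS x0 y0 h) x0 y0 z"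

lemma stateS_Suc: "i < length rs \<Longrightarrow>
  stateS x0 y0 (take (Suc i) rs) = stepS (stateS x0 y0 (take i rs)) (rs!i)"
  by (simp add: stateS_def take_Suc_conv_app_nth)

lemma pred_eq: "pred Lrn x0 y0 rs i = predict (stateS x0 y0 (take i rs)) x0 y0 (fst (rs!i))"
  by (simp add: pred_def Lrn_def)

lemma upd1_elems: "q \<in> set (upd1 S z \<phi>) \<Longrightarrow> \<exists>p\<in>set S. fst q = fst p \<and> fst (snd q) = fst (snd p)"
proof (cases "fidx S z")
  case None
  assume "q \<in> set (upd1 S z \<phi>)"
  then show ?thesis using None by (auto simp: upd1_def)
next
  case (Some i)
  assume q: "q \<in> set (upd1 S z \<phi>)"
  have i: "i < length S" using fidx_Some[OF Some] by simp
  have "q \<in> insert (addf (\<lambda>w. \<not> \<phi> w) (S!i)) (set S)"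
    using q Some set_update_subset_insert by (fastforce simp: upd1_def)
  then show ?thesis using i by (auto simp: addf_def)
qed

lemma stepS_elems: "q \<in> set (stepS S r) \<Longrightarrow> (\<exists>p\<in>set S. fst q = fst p \<and> fst (snd q) = fst (snd p))
   \<or> (\<exists>y \<phi>. snd r = Some (y, \<phi>) \<and> fst q = fst r \<and> fst (snd q) = y)"
  unfolding stepS_def
  by (auto split: option.splits if_splits dest: upd1_elems)

lemma observed_mono: "i \<le> j \<Longrightarrow> observed L x0 y0 rs i \<subseteq> observed L x0 y0 rs j"
  unfolding observed_def by fastforce

lemma state_observed: "i \<le> length rs \<Longrightarrow>
  \<forall>q\<in>set (stateS x0 y0 (take i rs)). (fst q, fst (snd q)) \<in> observed Lrn x0 y0 rs i"
proof (induction i)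
  case 0
  then show ?case by (simp add: stateS_def observed_def)
next
  case (Suc i)
  show ?case
  proof
    fix q assume q: "q \<in> set (stateS x0 y0 (take (Suc i) rs))"
    have il: "i < length rs" using Suc by simp
    from q stateS_Suc[OF il] have "q \<in> set (stepS (stateS x0 y0 (take i rs)) (rs!i))" by simp
    from stepS_elems[OF this] show "(fst q, fst (snd q)) \<in> observed Lrn x0 y0 rs (Suc i)"
    proof
      assume "\<exists>p\<in>set (stateS x0 y0 (take i rs)). fst q = fst p \<and> fst (snd q) = fst (snd p)"
      then obtain p where "p \<in> set (stateS x0 y0 (take i rs))" "fst q = fst p" "fst (snd q) = fst (snd p)" by blast
      then show ?thesis using Suc observed_mono[of i "Suc i"] by fastforce
    next
      assume "\<exists>y \<phi>. snd (rs!i) = Some (y, \<phi>) \<and> fst q = fst (rs!i) \<and> fst (snd q) = y"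
      then obtain y \<phi> where h: "snd (rs!i) = Some (y, \<phi>)" "fst q = fst (rs!i)" "fst (snd q) = y" by blast
      show ?thesis unfolding observed_def
        apply (rule insertI2) apply (rule CollectI)
        apply (rule exI[of _ i]) using h by simp
    qed
  qed
qed

lemma valid: "valid_explanations Lrn"
  unfolding valid_explanations_def
proof (intro allI impI)
  fix x0 y0 rs i assume i: "i < length (rs :: ('a \<times> ('a,'b) feedback) list)"
  let ?S = "stateS x0 y0 (take i rs)"
  have obs: "\<forall>q\<in>set ?S. (fst q, fst (snd q)) \<in> observed Lrn x0 y0 rs i"
    using state_observed[of i rs x0 y0] i by simp
  show "(snd (pred Lrn x0 y0 rs i), fst (pred Lrn x0 y0 rs i)) \<in> observed Lrn x0 y0 rs i"
  proof (cases "fidx ?S (fst (rs!i))")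
    case None
    then have "pred Lrn x0 y0 rs i = (y0, x0)" by (simp add: pred_eq predict_def)
    moreover have "(x0, y0) \<in> observed Lrn x0 y0 rs i" unfolding observed_def by (rule insertI1)
    ultimately show ?thesis by (simp only: fst_conv snd_conv)
  next
    case (Some j)
    have j: "j < length ?S" using fidx_Some[OF Some] by simp
    have "pred Lrn x0 y0 rs i = (fst (snd (?S!j)), fst (?S!j))" using Some by (simp add: pred_eq predict_def)
    moreover have "?S!j \<in> set ?S" using j by simp
    moreover have "(fst (?S!j), fst (snd (?S!j))) \<in> observed Lrn x0 y0 rs i"
      using obs j by (meson nth_mem)
    ultimately show ?thesis by (simp only: fst_conv snd_conv)
  qed
qed


lemma card_Suc_filter: "card {i. i < Suc n \<and> P i} = card {i. i < n \<and> P i} + (if P n then 1 else 0)"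
proof (cases "P n")
  case True
  then have "{i. i < Suc n \<and> P i} = insert n {i. i < n \<and> P i}" by (auto simp: less_Suc_eq)
  then show ?thesis using True by simp
next
  case False
  then have "{i. i < Suc n \<and> P i} = {i. i < n \<and> P i}" by (auto simp: less_Suc_eq)
  then show ?thesis using False by simp
qed

lemma sum_strict_nat: "finite A \<Longrightarrow> i \<in> A \<Longrightarrow> \<forall>j\<in>A. f j \<le> g j \<Longrightarrow> f i + 1 \<le> g i
   \<Longrightarrow> sum f A + 1 \<le> (sum g A :: nat)"
proof -
  assume A: "finite A" "i \<in> A" "\<forall>j\<in>A. f j \<le> g j" "f i + 1 \<le> g i"
  have "sum f A = f i + sum f (A - {i})" using A by (simp add: sum.remove)
  moreover have "sum g A = g i + sum g (A - {i})" using A by (simp add: sum.remove)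
  moreover have "sum f (A - {i}) \<le> sum g (A - {i})" using A by (intro sum_mono) auto
  ultimately show ?thesis using A by linarith
qed

lemma upd1_None: "fidx S z = None \<Longrightarrow> upd1 S z \<phi> = S"
  by (simp add: upd1_def)

lemma upd1_Some: "fidx S z = Some i \<Longrightarrow> upd1 S z \<phi> = S[i := addf (\<lambda>w. \<not> \<phi> w) (S!i)]"
  by (simp add: upd1_def)

lemma stepS_None: "stepS S (x, None) = S"
  by (simp add: stepS_def)

lemma stepS_Some: "stepS S (x, Some (y, \<phi>)) =
  (if \<exists>j<length (upd1 S x \<phi>). sat (upd1 S x \<phi> ! j) x \<and> fst (snd (upd1 S x \<phi> ! j)) = y
   then upd1 S x \<phi> else upd1 S x \<phi> @ [(x, y, [])])"
  by (auto simp: stepS_def)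

locale repr =
  fixes Phi :: "('x \<Rightarrow> bool) set" and m :: nat and G :: "nat \<Rightarrow> 'x set" and lab :: "nat \<Rightarrow> 'y"
    and sel :: "'x \<Rightarrow> nat" and phi :: "nat \<Rightarrow> nat \<Rightarrow> ('x \<Rightarrow> bool)"
  assumes R: "is_representation Phi m G lab sel phi"
begin

lemma sel_lt: "sel x < m" using R by (simp add: is_representation_def)
lemma inG: "x \<in> G (sel x)" using R by (simp add: is_representation_def)
lemma phi1: "i<m \<Longrightarrow> j<m \<Longrightarrow> lab i \<noteq> lab j \<Longrightarrow> z \<in> G i \<Longrightarrow> phi i j z"
  using R unfolding is_representation_def by blast
lemma phi2: "i<m \<Longrightarrow> j<m \<Longrightarrow> lab i \<noteq> lab j \<Longrightarrow> z \<in> G j \<Longrightarrow> \<not> phi i j z"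
  using R unfolding is_representation_def by blast

definition Dset :: "('x,'y) proto \<Rightarrow> nat set" where
  "Dset p = {b. b < m \<and> lab b \<noteq> lab (sel (fst p)) \<and> (\<lambda>z. \<not> phi b (sel (fst p)) z) \<in> set (snd (snd p))}"

definition honest :: "('x,'y) proto \<Rightarrow> bool" where
  "honest p \<longleftrightarrow> fst (snd p) = lab (sel (fst p)) \<and> (\<forall>f\<in>set (snd (snd p)). \<forall>z\<in>G (sel (fst p)). f z)"

definition Hset :: "('x,'y) proto list \<Rightarrow> nat set" where
  "Hset S = (\<lambda>j. sel (fst (S!j))) ` {j. j < length S \<and> honest (S!j)}"

definition SD :: "('x,'y) proto list \<Rightarrow> nat" where
  "SD S = (\<Sum>j<length S. card (Dset (S!j)))"

definition Psi :: "('x,'y) proto list \<Rightarrow> nat" where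
  "Psi S = SD S + card (Hset S)"

definition ext :: "('x,'y) proto list \<Rightarrow> ('x,'y) proto list \<Rightarrow> bool" where
  "ext S S' \<longleftrightarrow> length S \<le> length S' \<and> (\<forall>j<length S. fst (S'!j) = fst (S!j) \<and>
     fst (snd (S'!j)) = fst (snd (S!j)) \<and> set (snd (snd (S!j))) \<subseteq> set (snd (snd (S'!j))))"

lemma Dset_sub: "Dset p \<subseteq> {..<m} - {sel (fst p)}"
  unfolding Dset_def by auto

lemma Dset_fin: "finite (Dset p)"
  using Dset_sub by (meson finite_Diff finite_lessThan finite_subset)

lemma Dset_card: "card (Dset p) \<le> m - 1"
proof -
  have "card (Dset p) \<le> card ({..<m} - {sel (fst p)})"
    using Dset_sub by (intro card_mono) auto
  also have "\<dots> = m - 1" using sel_lt by simp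
  finally show ?thesis .
qed

lemma Hset_sub: "Hset S \<subseteq> {..<m}"
  unfolding Hset_def using sel_lt by auto

lemma Hset_fin: "finite (Hset S)"
  unfolding Hset_def by simp

lemma Hset_card: "card (Hset S) \<le> m"
  using card_mono[OF _ Hset_sub, of S] by simp

lemma SD_bound: "SD S \<le> length S * (m - 1)"
proof -
  have "SD S \<le> (\<Sum>j<length S. m - 1)" unfolding SD_def by (intro sum_mono Dset_card)
  then show ?thesis by simp
qed

lemma Psi_bound: "Psi S \<le> length S * (m - 1) + m"
  using SD_bound Hset_card unfolding Psi_def by (meson add_le_mono)

lemma ext_D: "ext S S' \<Longrightarrow> j < length S \<Longrightarrow> Dset (S!j) \<subseteq> Dset (S'!j)"
  unfolding ext_def Dset_def by auto

lemma ext_SD: "ext S S' \<Longrightarrow> SD S \<le> SD S'"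
proof -
  assume e: "ext S S'"
  have "SD S \<le> (\<Sum>j<length S. card (Dset (S'!j)))"
    unfolding SD_def using e ext_D by (intro sum_mono card_mono Dset_fin) auto
  also have "\<dots> \<le> SD S'"
    unfolding SD_def using e unfolding ext_def by (intro sum_mono2) auto
  finally show ?thesis .
qed

lemma ext_trans: "ext S1 S2 \<Longrightarrow> ext S2 S3 \<Longrightarrow> ext S1 S3"
  unfolding ext_def by (metis (no_types, lifting) dual_order.trans order_less_le_trans)

lemma ext_app: "ext S (S @ T)"
  unfolding ext_def by (simp add: nth_append)

lemma ext_upd1: "ext S (upd1 S z \<phi>)"
proof (cases "fidx S z")
  case None
  then show ?thesis by (simp add: upd1_None ext_def)
next
  case (Some i)
  then show ?thesis unfolding upd1_Some[OF Some] ext_def using fidx_Some[OF Some]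
    by (auto simp: nth_list_update addf_def)
qed

lemma Hset_app: "Hset S \<subseteq> Hset (S @ T)"
  unfolding Hset_def by (force simp: nth_append)

lemma Hset_app1: "honest q \<Longrightarrow> insert (sel (fst q)) (Hset S) \<subseteq> Hset (S @ [q])"
proof -
  assume h: "honest q"
  have "sel (fst q) \<in> Hset (S @ [q])" unfolding Hset_def
    using h by (intro image_eqI[of _ _ "length S"]) auto
  then show ?thesis using Hset_app by blast
qed

lemma honest_sat: "honest q \<Longrightarrow> sel (fst q) = sel x \<Longrightarrow> sat q x \<and> fst (snd q) = lab (sel x)"
  unfolding honest_def sat_def using inG by metis

lemma Hset_upd1: "fidx S z = Some i \<Longrightarrow> Hset S - {sel (fst (S!i))} \<subseteq> Hset (upd1 S z \<phi>)"
proof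
  fix b assume Si: "fidx S z = Some i" and b: "b \<in> Hset S - {sel (fst (S!i))}"
  then obtain j where j: "j < length S" "honest (S!j)" "b = sel (fst (S!j))"
    unfolding Hset_def by auto
  have "j \<noteq> i" using b j by auto
  then have "upd1 S z \<phi> ! j = S ! j" using upd1_Some[OF Si] by simp
  then show "b \<in> Hset (upd1 S z \<phi>)" unfolding Hset_def using j
    by (intro image_eqI[of _ _ j]) (auto simp: upd1_Some[OF Si])
qed

lemma card_minus1: "finite A \<Longrightarrow> A - {a} \<subseteq> B \<Longrightarrow> finite B \<Longrightarrow> card A \<le> card B + 1"
proof -
  assume a: "finite A" "A - {a} \<subseteq> B" "finite B"
  have "card A \<le> card (A - {a}) + 1"
  proof (cases "a \<in> A")
    case True
    then have "card (A - {a}) = card A - 1" using a by (simp add: card_Diff_singleton)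
    moreover have "card A > 0" using True a card_gt_0_iff by blast
    ultimately show ?thesis by simp
  next
    case False
    then show ?thesis by simp
  qed
  also have "card (A - {a}) \<le> card B" using a by (intro card_mono) auto
  finally show ?thesis by simp
qed

lemma Hset_upd1_card: "card (Hset S) \<le> card (Hset (upd1 S z \<phi>)) + 1"
proof (cases "fidx S z")
  case None
  then show ?thesis by (simp add: upd1_None)
next
  case (Some i)
  show ?thesis using card_minus1[OF Hset_fin Hset_upd1[OF Some] Hset_fin] .
qed

lemma step_any:
  shows "Psi S \<le> Psi (stepS S (x, Some (y, \<phi>))) + 1 \<and> length (stepS S (x, Some (y, \<phi>))) \<le> length S + 1
     \<and> card (Hset S) \<le> card (Hset (stepS S (x, Some (y, \<phi>)))) + 1"
proof -
  define S1 where "S1 = upd1 S x \<phi>"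
  define S' where "S' = stepS S (x, Some (y, \<phi>))"
  have e1: "ext S S1" unfolding S1_def by (rule ext_upd1)
  have S'c: "S' = S1 \<or> S' = S1 @ [(x, y, [])]" unfolding S'_def S1_def stepS_Some by auto
  have e2: "ext S1 S'" using S'c ext_app[of S1] unfolding ext_def by auto
  have h2: "Hset S1 \<subseteq> Hset S'" using S'c Hset_app[of S1] by auto
  have l1: "length S1 = length S" unfolding S1_def upd1_def by (auto split: option.splits)
  have "SD S \<le> SD S'" using ext_SD ext_trans[OF e1 e2] by blast
  moreover have "card (Hset S) \<le> card (Hset S') + 1"
    using Hset_upd1_card[of S x \<phi>] card_mono[OF Hset_fin h2] unfolding S1_def by linarith
  moreover have "length S' \<le> length S + 1" using S'c l1 by auto
  ultimately show ?thesis unfolding S'_def[symmetric] Psi_def by linarith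
qed

lemma step_conf:
  assumes p: "p = predict S x0 y0 x"
    and c1: "y = lab (sel x)" and c2: "lab (sel x) \<noteq> lab (sel (snd p))"
    and c3: "\<phi> = phi (sel x) (sel (snd p))"
  shows "Psi S + 1 \<le> Psi (stepS S (x, Some (y, \<phi>))) \<and>
     length (stepS S (x, Some (y, \<phi>))) + card (Hset S) \<le> length S + card (Hset (stepS S (x, Some (y, \<phi>))))"
proof -
  define S1 where "S1 = upd1 S x \<phi>"
  define S' where "S' = stepS S (x, Some (y, \<phi>))"
  define b where "b = sel x"
  have l1: "length S1 = length S" unfolding S1_def upd1_def by (auto split: option.splits)
  have e1: "ext S S1" unfolding S1_def by (rule ext_upd1)
  have S'c: "S' = (if \<exists>j<length S1. sat (S1 ! j) x \<and> fst (snd (S1 ! j)) = y then S1 else S1 @ [(x, y, [])])"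
    unfolding S'_def S1_def stepS_Some by simp
  have hq: "honest (x, y, [])" unfolding honest_def using c1 by simp
  have nocr: "S' = S1" if "\<exists>j<length S1. sat (S1 ! j) x \<and> fst (snd (S1 ! j)) = y"
    using S'c that by simp
  have cr: "S' = S1 @ [(x, y, [])] \<and> card (Hset S1) + 1 \<le> card (Hset S')"
    if nc: "\<not> (\<exists>j<length S1. sat (S1 ! j) x \<and> fst (snd (S1 ! j)) = y)"
  proof -
    have S'e: "S' = S1 @ [(x, y, [])]" using S'c nc by simp
    have "b \<notin> Hset S1"
    proof
      assume "b \<in> Hset S1"
      then obtain j where j: "j < length S1" "honest (S1!j)" "b = sel (fst (S1!j))"
        unfolding Hset_def by auto
      then have "sat (S1!j) x \<and> fst (snd (S1!j)) = y" using honest_sat c1 b_def by metis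
      then show False using nc j by blast
    qed
    moreover have "insert b (Hset S1) \<subseteq> Hset S'"
      using Hset_app1[OF hq, of S1] S'e b_def by simp
    ultimately have "card (insert b (Hset S1)) \<le> card (Hset S')"
      by (intro card_mono Hset_fin) 
    then show ?thesis using S'e \<open>b \<notin> Hset S1\<close> Hset_fin[of S1] by simp
  qed
  have e2: "ext S1 S'" using S'c ext_app[of S1] unfolding ext_def by auto
  have h2: "Hset S1 \<subseteq> Hset S'" using S'c Hset_app[of S1] by auto
  have hc2: "card (Hset S1) \<le> card (Hset S')" by (rule card_mono[OF Hset_fin h2])
  have sd2: "SD S1 \<le> SD S'" by (rule ext_SD[OF e2])
  show ?thesis
  proof (cases "fidx S x")
    case None
    have S1e: "S1 = S" unfolding S1_def by (rule upd1_None[OF None])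
    have "\<not> (\<exists>j<length S1. sat (S1 ! j) x \<and> fst (snd (S1 ! j)) = y)"
      using fidx_None[OF None] S1e by auto
    then have c: "S' = S1 @ [(x,y,[])]" "card (Hset S1) + 1 \<le> card (Hset S')" using cr by auto
    have "length S' = length S + 1" using c(1) l1 by simp
    moreover have "card (Hset S) + 1 \<le> card (Hset S')" "SD S \<le> SD S'" using c(2) sd2 S1e by simp_all
    ultimately show ?thesis unfolding S'_def[symmetric] Psi_def by linarith
  next
    case (Some i)
    have i: "i < length S" "sat (S!i) x" using fidx_Some[OF Some] by auto
    define a where "a = sel (fst (S!i))"
    have pe: "snd p = fst (S!i)" using Some p by (simp add: predict_def)
    have lab_ne: "lab b \<noteq> lab a" using c2 pe unfolding a_def b_def by simp
    have phe: "\<phi> = phi b a" using c3 pe unfolding a_def b_def by simp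
    have bm: "b < m" "a < m" unfolding a_def b_def by (auto intro: sel_lt)
    have S1i: "S1 ! i = addf (\<lambda>w. \<not> phi b a w) (S!i)"
      using upd1_Some[OF Some] i phe unfolding S1_def by simp
    have S1j: "S1 ! j = S ! j" if "j \<noteq> i" for j
      using upd1_Some[OF Some] that unfolding S1_def by simp
    have fstS1i: "fst (S1!i) = fst (S!i)" using S1i by (simp add: addf_def)
    have hon: "honest (S1!i)" if "honest (S!i)"
    proof -
      have "\<forall>z\<in>G a. \<not> phi b a z" using phi2[OF bm lab_ne] by blast
      then show ?thesis using that S1i unfolding honest_def addf_def a_def by auto
    qed
    have hs: "Hset S \<subseteq> Hset S1"
    proof
      fix c assume "c \<in> Hset S"
      then obtain j where j: "j < length S" "honest (S!j)" "c = sel (fst (S!j))"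
        unfolding Hset_def by auto
      have "honest (S1!j) \<and> fst (S1!j) = fst (S!j)"
        using j hon S1j fstS1i by (cases "j = i") auto
      then show "c \<in> Hset S1" unfolding Hset_def using j l1
        by (intro image_eqI[of _ _ j]) auto
    qed
    have bn: "b \<notin> Dset (S!i)"
    proof
      assume "b \<in> Dset (S!i)"
      then have "(\<lambda>z. \<not> phi b a z) \<in> set (snd (snd (S!i)))" unfolding Dset_def a_def by simp
      then have "\<not> phi b a x" using i(2) unfolding sat_def by fastforce
      moreover have "phi b a x" using phi1[OF bm lab_ne] inG b_def by blast
      ultimately show False by simp
    qed
    have bin: "b \<in> Dset (S1!i)"
      unfolding Dset_def fstS1i using S1i bm lab_ne unfolding a_def by (simp add: addf_def)
    have "Dset (S!i) \<subseteq> Dset (S1!i)" using ext_D[OF e1 i(1)] .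
    then have "Dset (S!i) \<subset> Dset (S1!i)" using bn bin by blast
    then have "card (Dset (S!i)) < card (Dset (S1!i))"
      by (rule psubset_card_mono[OF Dset_fin])
    then have "card (Dset (S!i)) + 1 \<le> card (Dset (S1!i))" by simp
    moreover have "\<forall>j\<in>{..<length S}. card (Dset (S!j)) \<le> card (Dset (S1!j))"
      using ext_D[OF e1] by (simp add: card_mono[OF Dset_fin])
    ultimately have "SD S + 1 \<le> SD S1" unfolding SD_def l1
      using i(1) by (intro sum_strict_nat) auto
    then have ps: "Psi S + 1 \<le> Psi S'" unfolding Psi_def
      using sd2 hc2 card_mono[OF Hset_fin hs] by linarith
    have "length S' + card (Hset S) \<le> length S + card (Hset S')"
    proof (cases "\<exists>j<length S1. sat (S1 ! j) x \<and> fst (snd (S1 ! j)) = y")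
      case True
      then show ?thesis using nocr l1 card_mono[OF Hset_fin hs] by simp
    next
      case False
      then have c: "S' = S1 @ [(x,y,[])]" "card (Hset S1) + 1 \<le> card (Hset S')" using cr by auto
      have "length S' = length S + 1" using c(1) l1 by simp
      then show ?thesis using c(2) card_mono[OF Hset_fin hs] by linarith
    qed
    then show ?thesis using ps unfolding S'_def by simp
  qed
qed

end

context repr
begin

lemma inv: "n \<le> length rs \<Longrightarrow>
  card {i. i < n \<and> snd (rs!i) \<noteq> None} \<le> Psi (stateS x0 y0 (take n rs))
      + 2 * card {i. i < n \<and> \<not> conforms Lrn x0 y0 rs lab sel phi i} \<and>
  length (stateS x0 y0 (take n rs)) \<le> 1 + card (Hset (stateS x0 y0 (take n rs)))
      + 2 * card {i. i < n \<and> \<not> conforms Lrn x0 y0 rs lab sel phi i}"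
proof (induction n)
  case 0
  show ?case by (simp add: stateS_def)
next
  case (Suc n)
  have nl: "n < length rs" using Suc.prems by simp
  define S where "S = stateS x0 y0 (take n rs)"
  define S' where "S' = stateS x0 y0 (take (Suc n) rs)"
  define C where "C = (\<lambda>i. conforms Lrn x0 y0 rs lab sel phi i)"
  define mo where "mo = card {i. i < n \<and> snd (rs!i) \<noteq> None}"
  define mn where "mn = card {i. i < Suc n \<and> snd (rs!i) \<noteq> None}"
  define eo where "eo = card {i. i < n \<and> \<not> C i}"
  define en where "en = card {i. i < Suc n \<and> \<not> C i}"
  have IH: "mo \<le> Psi S + 2 * eo" "length S \<le> 1 + card (Hset S) + 2 * eo"
    using Suc.IH nl unfolding mo_def S_def eo_def C_def by auto
  have S'e: "S' = stepS S (rs!n)" unfolding S'_def S_def by (rule stateS_Suc[OF nl])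
  obtain x fb where r: "rs!n = (x, fb)" by (cases "rs!n")
  have M: "mn = mo + (if snd (rs!n) \<noteq> None then 1 else 0)"
    unfolding mn_def mo_def by (rule card_Suc_filter)
  have E: "en = eo + (if \<not> C n then 1 else 0)"
    unfolding en_def eo_def by (rule card_Suc_filter)
  have goal: "mn \<le> Psi S' + 2 * en \<and> length S' \<le> 1 + card (Hset S') + 2 * en"
  proof (cases fb)
    case None
    then have "S' = S" using S'e r stepS_None by simp
    moreover have "mn = mo" using M r None by simp
    moreover have "eo \<le> en" using E by simp
    ultimately show ?thesis using IH by (simp only:) linarith
  next
    case (Some yf)
    obtain y \<phi> where yf: "yf = (y, \<phi>)" by (cases yf)
    have S'e2: "S' = stepS S (x, Some (y, \<phi>))" using S'e r Some yf by simp
    have M1: "mn = mo + 1" using M r Some by simp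
    show ?thesis
    proof (cases "C n")
      case True
      define p where "p = predict S x0 y0 x"
      have "pred Lrn x0 y0 rs n = p" using r by (simp add: pred_eq p_def S_def)
      then have cc: "fst p \<noteq> lab (sel x) \<and> y = lab (sel x) \<and> lab (sel x) \<noteq> lab (sel (snd p))
          \<and> \<phi> = phi (sel x) (sel (snd p))"
        using True r Some yf unfolding C_def conforms_def Let_def by simp
      have st: "Psi S + 1 \<le> Psi S' \<and> length S' + card (Hset S) \<le> length S + card (Hset S')"
        unfolding S'e2 using cc by (intro step_conf[OF p_def]) auto
      have "en = eo" using E True by simp
      then show ?thesis using IH M1 st by linarith
    next
      case False
      have st: "Psi S \<le> Psi S' + 1 \<and> length S' \<le> length S + 1 \<and> card (Hset S) \<le> card (Hset S') + 1"
        unfolding S'e2 by (rule step_any)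
      have "en = eo + 1" using E False by simp
      then show ?thesis using IH M1 st by linarith
    qed
  qed
  then show ?case unfolding mn_def S'_def en_def C_def .
qed

lemma final: "card {i. i < length rs \<and> snd (rs!i) \<noteq> None} \<le>
   (m - 1) * (1 + m + 2 * card {i. i < length rs \<and> \<not> conforms Lrn x0 y0 rs lab sel phi i})
   + m + 2 * card {i. i < length rs \<and> \<not> conforms Lrn x0 y0 rs lab sel phi i}"
proof -
  define S where "S = stateS x0 y0 (take (length rs) rs)"
  define e where "e = card {i. i < length rs \<and> \<not> conforms Lrn x0 y0 rs lab sel phi i}"
  have I: "card {i. i < length rs \<and> snd (rs!i) \<noteq> None} \<le> Psi S + 2 * e"
     "length S \<le> 1 + card (Hset S) + 2 * e"
    using inv[of "length rs" rs x0 y0] unfolding S_def e_def by auto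
  have "length S \<le> 1 + m + 2 * e" using I(2) Hset_card[of S] by linarith
  then have "length S * (m - 1) \<le> (1 + m + 2 * e) * (m - 1)" by (rule mult_le_mono1)
  moreover have "Psi S \<le> length S * (m - 1) + m" by (rule Psi_bound)
  ultimately show ?thesis using I(1) unfolding e_def[symmetric] by (simp add: mult.commute)
qed

lemma m1_sub: "m = 1 \<Longrightarrow> {i. i < length rs \<and> snd (rs!i) \<noteq> None}
   \<subseteq> {i. i < length rs \<and> \<not> conforms Lrn x0 y0 rs lab sel phi i}"
proof
  fix i assume m: "m = 1" and i: "i \<in> {i. i < length rs \<and> snd (rs!i) \<noteq> None}"
  have s0: "sel z = 0" for z using sel_lt[of z] m by simp
  obtain x y f where r: "rs!i = (x, Some (y, f))" using i by (cases "rs!i") auto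
  have "\<not> conforms Lrn x0 y0 rs lab sel phi i"
    unfolding conforms_def Let_def using r s0 by simp
  then show "i \<in> {i. i < length rs \<and> \<not> conforms Lrn x0 y0 rs lab sel phi i}" using i by simp
qed

end

lemma log_bound: "3 * real U \<le> 32 * real U * (log 2 (8 * real U))\<^sup>2"
proof (cases "U = 0")
  case True
  then show ?thesis by simp
next
  case False
  have l8: "log 2 8 = (3::real)" using log_pow_cancel[of "2::real" 3] by simp
  have "log 2 8 \<le> log 2 (8 * real U)" using False by (subst log_le_cancel_iff) auto
  then have "3 \<le> log 2 (8 * real U)" using l8 by simp
  then have "3 * 3 \<le> log 2 (8 * real U) * log 2 (8 * real U)" by (intro mult_mono) auto
  then have "9 \<le> (log 2 (8 * real U))\<^sup>2" by (simp add: power2_eq_square)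
  then show ?thesis using False by (simp add: mult_le_cancel_left1)
qed

theorem theorem2:
  "\<exists>L :: ('x, 'y :: finite) learner. valid_explanations L \<and>
     (\<forall>Phi m k x0 y0 rs. neg_closed Phi \<and> consistent_stream Phi m k L x0 y0 rs \<longrightarrow>
        real (mistakes rs) \<le> 32 * real (UB m k) * (log 2 (8 * real (UB m k)))\<^sup>2)"
proof (intro exI[of _ Lrn] conjI valid allI impI)
  fix Phi m k x0 y0 rs
  assume a: "neg_closed Phi \<and> consistent_stream Phi m k (Lrn :: ('x, 'y) learner) x0 y0 rs"
  then obtain G lab sel phi where R: "is_representation Phi m G lab sel phi"
    and nk: "num_exceptions Lrn x0 y0 rs lab sel phi \<le> k"
    unfolding consistent_stream_def by blast
  interpret repr Phi m G lab sel phi by (rule repr.intro[OF R])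
  define e where "e = card {i. i < length rs \<and> \<not> conforms Lrn x0 y0 rs lab sel phi i}"
  have ek: "e \<le> k" using nk unfolding num_exceptions_def e_def by simp
  have m1: "m \<ge> 1" using sel_lt[of x0] by simp
  have mis3: "mistakes rs \<le> 3 * UB m k"
  proof (cases "m = 1")
    case True
    have "mistakes rs \<le> e" unfolding mistakes_def e_def
      by (rule card_mono) (use m1_sub[OF True] in auto)
    then show ?thesis using True ek by (simp add: UB_def)
  next
    case False
    then obtain t where t: "m = t + 2" using m1 by (metis add.commute le_Suc_ex le_antisym not_less_eq_eq one_add_one plus_1_eq_Suc)
    have "mistakes rs \<le> (m - 1) * (1 + m + 2 * e) + m + 2 * e"
      using final unfolding mistakes_def e_def by simp
    also have "\<dots> \<le> (m - 1) * (1 + m + 2 * k) + m + 2 * k"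
      using ek by (intro add_mono mult_le_mono2) auto
    also have "\<dots> \<le> 3 * UB m k" unfolding UB_def t by (simp add: algebra_simps)
    finally show ?thesis .
  qed
  then have "real (mistakes rs) \<le> 3 * real (UB m k)" by linarith
  also have "\<dots> \<le> 32 * real (UB m k) * (log 2 (8 * real (UB m k)))\<^sup>2" by (rule log_bound)
  finally show "real (mistakes rs) \<le> 32 * real (UB m k) * (log 2 (8 * real (UB m k)))\<^sup>2" .
qed

end
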